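(* Let $A,B\in\mathbb{Z}$ with $4A^3+27B^2\ne0$, let $M$ be a positive integer with $\max\{10\sqrt{|A|},5\sqrt[3]{|B|}\}\le M$, let $D$ be a squarefree positive integer and $E_D: y^2=x^3+D^2Ax+D^3B$. Let $P,Q\in E_D(\mathbb{Q})$ with $MD\le x(P)<x(Q)$ and $y(P)y(Q)>0$. Then \[0.19\,x(P)\le x(P+Q)\le 2\,x(P).\] *)

theory Defs
  imports Complex_Main "HOL-Computational_Algebra.Squarefree"
begin

datatype ec_point = Inf | Pt rat rat

definition on_curve :: "rat \<Rightarrow> rat \<Rightarrow> ec_point \<Rightarrow> bool" where
  "on_curve a b P = (case P of Inf \<Rightarrow> True | Pt x y \<Rightarrow> y^2 = x^3 + a*x + b)"

fun ec_add :: "rat \<Rightarrow> ec_point \<Rightarrow> ec_point \<Rightarrow> ec_point" where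
  "ec_add a Inf Q = Q"
| "ec_add a P Inf = P"
| "ec_add a (Pt x1 y1) (Pt x2 y2) =
     (if x1 = x2 then
        (if y1 = - y2 then Inf
         else (let l = (3 * x1^2 + a) / (2 * y1); x3 = l^2 - 2 * x1
               in Pt x3 (l * (x1 - x3) - y1)))
      else (let l = (y2 - y1) / (x2 - x1); x3 = l^2 - x1 - x2
            in Pt x3 (l * (x1 - x3) - y1)))"

end

theory Submission
  imports Defs
begin

lemma core:
  fixes Q s t a b :: real
  assumes Q: "Q > 1" and s0: "s > 0" and t0: "t > 0"
    and S: "s^2 = 1 + a + b" and T: "t^2 = Q^3 + a*Q + b"
    and ha: "\<bar>a\<bar> \<le> 1/100" and hb: "\<bar>b\<bar> \<le> 1/125"
  shows "19/100 \<le> ((t - s)/(Q - 1))^2 - 1 - Q \<and> ((t - s)/(Q - 1))^2 - 1 - Q \<le> 2"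
proof -
  define l where "l = (t - s)/(Q - 1)"
  define x3 where "x3 = l^2 - 1 - Q"
  have tl: "t = s + l*(Q-1)" using Q by (simp add: l_def)
  have "(s + l*(Q-1))^2 = Q^3 + a*Q + b" using T tl by simp
  hence "(Q-1) * (2*s*l + l^2*(Q-1)) = (Q-1) * (Q^2+Q+1+a)"
    using S by (simp add: algebra_simps power2_eq_square power3_eq_cube)
  hence E: "2*s*l + l^2*(Q-1) = Q^2+Q+1+a" using Q by simp
  define N where "N = Q^2+Q+1+a"
  have lN: "l*(s+t) = N" unfolding N_def using E tl by algebra
  have st0: "s + t > 0" using s0 t0 by simp
  have Nge: "N \<ge> Q^2+Q+99/100" unfolding N_def using ha by simp
  have Q2: "Q^2 \<ge> 1" using Q by (simp add: one_le_power)
  have Npos: "N > 0" using Nge Q2 Q by linarith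
  have l0: "l > 0" using lN st0 Npos by (metis zero_less_mult_pos2)
  have lsq: "l^2 * (s+t)^2 = N^2" using lN by (metis power_mult_distrib)
  have s1: "s^2 \<ge> 982/1000" "s^2 \<le> 1018/1000" using S ha hb by auto
  have sge: "s \<ge> 98/100"
  proof (rule ccontr)
    assume "\<not> ?thesis" hence "s < 98/100" by simp
    hence "s^2 < (98/100)^2" using s0 by (simp add: power_strict_mono)
    thus False using s1 by (simp add: power_divide)
  qed
  have sle: "s \<le> 1009/1000"
  proof (rule ccontr)
    assume "\<not> ?thesis" hence "s > 1009/1000" by simp
    hence "s^2 > (1009/1000)^2" using power_strict_mono[of "1009/1000" s 2] by simp
    thus False using s1 by (simp add: power_divide)
  qed
  have Q3: "Q^3 \<ge> Q^2" using Q by (simp add: power3_eq_cube power2_eq_square)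
  have aQ: "\<bar>a*Q\<bar> \<le> Q/100" using ha Q by (simp add: abs_mult mult_right_mono)
  have t2: "t^2 \<ge> 98/100 * Q^2"
  proof -
    have "Q \<le> Q^2" using Q by (simp add: power2_eq_square)
    thus ?thesis using T aQ hb Q3 Q2 by linarith
  qed
  have tge: "t \<ge> 98/100 * Q"
  proof (rule ccontr)
    assume "\<not> ?thesis" hence "t < 98/100 * Q" by simp
    hence "t^2 < (98/100*Q)^2" using t0 by (simp add: power_strict_mono)
    hence "t^2 < 9604/10000 * Q^2" by (simp add: power_mult_distrib power_divide)
    thus False using t2 Q2 by linarith
  qed
  have stge: "s*t \<ge> 98/100*(98/100*Q)" using sge tge Q by (intro mult_mono) auto
  have up: "N^2 \<le> (3+Q)*(s+t)^2"
  proof -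
    have e: "(s+t)^2 = s^2 + t^2 + 2*(s*t)" by (simp add: power2_eq_square algebra_simps)
    have "(s+t)^2 \<ge> (1+a+b) + (Q^3+a*Q+b) + 2*(98/100*(98/100*Q))" using e S T stge by linarith
    hence h1: "(3+Q)*(s+t)^2 \<ge> (3+Q)*((1+a+b) + (Q^3+a*Q+b) + 2*(98/100*(98/100*Q)))"
      using Q by (intro mult_left_mono) auto
    have aQ2: "\<bar>a*Q^2\<bar> \<le> Q^2/100" using mult_right_mono[OF ha, of "Q^2"] by (simp add: abs_mult)
    have aa0: "\<bar>a\<bar>*\<bar>a\<bar> \<le> (1/100)*(1/100)" using ha by (intro mult_mono) auto
    have aa: "a*a \<le> 1/10000" using aa0 by (simp add: abs_mult_self_eq)
    have bQ: "\<bar>b*Q\<bar> \<le> Q/125" using hb Q by (simp add: abs_mult mult_right_mono)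
    have Q4: "Q^3 + 4*Q \<ge> 4*Q^2"
    proof -
      have "0 \<le> Q*(Q-2)^2" using Q by simp
      thus ?thesis by (simp add: power2_eq_square power3_eq_cube algebra_simps)
    qed
    have id: "(3+Q)*((1+a+b) + (Q^3+a*Q+b) + 2*(98/100*(98/100*Q))) - N^2
       = Q^3 - 10792/10000*Q^2 + 47624/10000*Q + 2 - a*Q^2 + 2*(a*Q) + a + 6*b + 2*(b*Q) - a*a"
      unfolding N_def by algebra
    have "N^2 \<le> (3+Q)*((1+a+b) + (Q^3+a*Q+b) + 2*(98/100*(98/100*Q)))"
      using id aQ aQ2 aa bQ ha hb Q Q2 Q3 Q4 by linarith
    thus ?thesis using h1 by linarith
  qed
  have lup: "l^2 \<le> 3 + Q"
  proof -
    have "l^2 * (s+t)^2 \<le> (3+Q)*(s+t)^2" using up lsq by simp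
    thus ?thesis using st0 by simp
  qed
  have low: "N^2 \<ge> 19881/10000*(s+t)^2"
  proof -
    have e0': "0 \<le> (s-t)^2" by simp
    have e: "(s+t)^2 \<le> 2*(s^2+t^2)" using e0' by (simp add: power2_eq_square algebra_simps)
    have N2: "N^2 \<ge> (Q^2+Q+99/100)^2" using Nge Q2 Q by (intro power_mono) auto
    define e where "e = Q - 1"
    have e0: "e > 0" using Q e_def by simp
    have "(Q^2+Q+99/100)^2 \<ge> 19881/10000*(2*((1+a+b)+(Q^3+a*Q+b)))"
    proof -
      have Qe: "Q = 1 + e" using e_def by simp
      have id: "(Q^2+Q+99/100)^2 - 19881/5000*(1026/1000+Q^3+Q/100)
        = 4222784/5000000 + 2985819/500000*e + 15257/5000*e^2 + 10119/5000*e^3 + e^4"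
        unfolding Qe by (simp add: field_simps power2_eq_square power3_eq_cube power4_eq_xxxx)
      have "e^2 \<ge> 0" "e^3 \<ge> 0" "e^4 \<ge> 0" using e0 by auto
      hence h1: "(Q^2+Q+99/100)^2 - 19881/5000*(1026/1000+Q^3+Q/100) \<ge> 0"
        using id e0 by linarith
      have h2: "1+a+b+(Q^3+a*Q+b) \<le> 1026/1000 + Q^3 + Q/100"
        using aQ ha hb by (simp add: abs_le_iff)
      have "19881 / 10000 * (2 * (1 + a + b + (Q ^ 3 + a * Q + b))) \<le> 19881 / 10000 * (2 * (1026 / 1000 + Q ^ 3 + Q / 100))"
        using h2 by (intro mult_left_mono) auto
      also have "\<dots> = 19881 / 5000 * (1026 / 1000 + Q ^ 3 + Q / 100)" by simp
      finally show ?thesis using h1 by simp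
    qed
    moreover have "19881/10000*(s+t)^2 \<le> 19881/10000*(2*(s^2+t^2))"
      using e by (intro mult_left_mono) auto
    ultimately show ?thesis using N2 unfolding S T by linarith
  qed
  have llow: "l^2 \<ge> 19881/10000"
  proof -
    have "19881/10000*(s+t)^2 \<le> l^2 * (s+t)^2" using low lsq by simp
    thus ?thesis using st0 by simp
  qed
  have lge: "l \<ge> 141/100"
  proof (rule ccontr)
    assume "\<not> ?thesis" hence "l < 141/100" by simp
    hence "l^2 < (141/100)^2" using l0 by (simp add: power_strict_mono)
    thus False using llow by (simp add: power_divide)
  qed
  define x where "x = (19/100::real)"
  define L where "L = l*(x-1) + s"
  have g: "x^3 + a*x + b - L^2 = (x-1)*(x-Q)*(x-x3)"
    unfolding L_def x3_def using E S by algebra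
  have Leq: "L = s - 81/100*l" unfolding L_def x_def by (simp add: algebra_simps)
  have Lle: "-L \<ge> 1331/10000" unfolding Leq using lge sle by linarith
  have L2: "L^2 \<ge> (1331/10000)^2"
  proof -
    have "(1331/10000::real)^2 \<le> (-L)^2" using Lle by (intro power_mono) auto
    thus ?thesis by simp
  qed
  have "x^3 + a*x + b \<le> 16759/1000000" unfolding x_def using ha hb by (simp add: power_divide abs_le_iff)
  moreover have L2': "L^2 \<ge> 1771561/100000000" using L2 by (simp add: power_divide)
  ultimately have "(x-1)*(x-Q)*(x-x3) \<le> 0" using g by linarith
  moreover have "(x-1)*(x-Q) > 0" unfolding x_def using Q by (simp add: mult_neg_neg)
  ultimately have "x - x3 \<le> 0"
  proof -
    assume h1: "(x-1)*(x-Q)*(x-x3) \<le> 0" and h2: "(x-1)*(x-Q) > 0"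
    show ?thesis
    proof (rule ccontr)
      assume "\<not> ?thesis" hence "x - x3 > 0" by simp
      hence "(x-1)*(x-Q)*(x-x3) > 0" using h2 by (rule mult_pos_pos[rotated])
      thus False using h1 by simp
    qed
  qed
  hence "19/100 \<le> x3" unfolding x_def by simp
  moreover have "x3 \<le> 2" unfolding x3_def using lup by simp
  ultimately show ?thesis unfolding x3_def l_def by simp
qed

lemma hom:
  fixes p q s t a b :: real
  assumes p: "p > 0" and pq: "p < q" and s0: "s > 0" and t0: "t > 0"
    and S: "s^2 = p^3 + a*p + b" and T: "t^2 = q^3 + a*q + b"
    and ha: "\<bar>a\<bar> \<le> p^2/100" and hb: "\<bar>b\<bar> \<le> p^3/125"
  shows "19/100*p \<le> ((t - s)/(q - p))^2 - p - q \<and> ((t - s)/(q - p))^2 - p - q \<le> 2*p"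
proof -
  define r where "r = sqrt p"
  have r0: "r > 0" using p r_def by simp
  have pr: "p = r^2" using p r_def by simp
  have r3: "r^3 > 0" using r0 by simp
  have p2: "p^2 > 0" "p^3 > 0" using p by auto
  have C: "19/100 \<le> ((t/r^3 - s/r^3)/(q/p - 1))^2 - 1 - q/p \<and> ((t/r^3 - s/r^3)/(q/p - 1))^2 - 1 - q/p \<le> 2"
  proof (rule core)
    show "q/p > 1" using p pq by simp
    show "s/r^3 > 0" "t/r^3 > 0" using s0 t0 r3 by auto
    have r6: "(r^3)^2 = p^3" unfolding pr by (simp add: power_mult[symmetric])
    show "(s/r^3)^2 = 1 + a/p^2 + b/p^3"
      unfolding power_divide r6 S using p by (simp add: field_simps power2_eq_square power3_eq_cube)
    show "(t/r^3)^2 = (q/p)^3 + a/p^2*(q/p) + b/p^3"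
      unfolding power_divide r6 T using p by (simp add: field_simps power2_eq_square power3_eq_cube)
    have "\<bar>a/p^2\<bar> = \<bar>a\<bar>/p^2" by simp
    also have "\<dots> \<le> (p^2/100)/p^2" using ha p2(1) by (intro divide_right_mono) auto
    also have "\<dots> = 1/100" using p2(1) by simp
    finally show "\<bar>a/p^2\<bar> \<le> 1/100" .
    have "\<bar>b/p^3\<bar> = \<bar>b\<bar>/p^3" using p by simp
    also have "\<dots> \<le> (p^3/125)/p^3" using hb p2(2) by (intro divide_right_mono) auto
    also have "\<dots> = 1/125" using p2(2) by simp
    finally show "\<bar>b/p^3\<bar> \<le> 1/125" .
  qed
  define X where "X = (t - s)/(q - p)"
  have e1: "(t/r^3 - s/r^3)/(q/p - 1) = X / r"
    unfolding X_def using r0 pq unfolding pr by (simp add: field_simps power2_eq_square power3_eq_cube)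
  have e2: "((t/r^3 - s/r^3)/(q/p - 1))^2 - 1 - q/p = (X^2 - p - q)/p"
    unfolding e1 power_divide using p pr by (simp add: field_simps)
  have "19/100 \<le> (X^2 - p - q)/p" "(X^2 - p - q)/p \<le> 2" using C unfolding e2 by auto
  hence "19/100*p \<le> X^2 - p - q" "X^2 - p - q \<le> 2*p" using p by (auto simp: field_simps)
  thus ?thesis unfolding X_def by simp
qed


lemma homQ:
  fixes p q s t a b :: rat
  assumes p: "p > 0" and pq: "p < q" and s0: "s > 0" and t0: "t > 0"
    and S: "s^2 = p^3 + a*p + b" and T: "t^2 = q^3 + a*q + b"
    and ha: "\<bar>a\<bar> \<le> p^2/100" and hb: "\<bar>b\<bar> \<le> p^3/125"
  shows "19/100*p \<le> ((t - s)/(q - p))^2 - p - q \<and> ((t - s)/(q - p))^2 - p - q \<le> 2*p"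
proof -
  let ?R = "of_rat :: rat \<Rightarrow> real"
  have H: "19/100*?R p \<le> ((?R t - ?R s)/(?R q - ?R p))^2 - ?R p - ?R q \<and>
      ((?R t - ?R s)/(?R q - ?R p))^2 - ?R p - ?R q \<le> 2*?R p"
  proof (rule hom)
    show "?R p > 0" "?R p < ?R q" "?R s > 0" "?R t > 0" using p pq s0 t0 by (auto simp: of_rat_less)
    show "(?R s)^2 = (?R p)^3 + ?R a * ?R p + ?R b"
      using arg_cong[OF S, of ?R] by (simp add: of_rat_add of_rat_mult of_rat_power)
    show "(?R t)^2 = (?R q)^3 + ?R a * ?R q + ?R b"
      using arg_cong[OF T, of ?R] by (simp add: of_rat_add of_rat_mult of_rat_power)
    have "?R \<bar>a\<bar> \<le> ?R (p^2/100)" using ha by (simp only: of_rat_less_eq)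
    thus "\<bar>?R a\<bar> \<le> (?R p)^2/100" by (simp add: of_rat_divide of_rat_power)
    have "?R \<bar>b\<bar> \<le> ?R (p^3/125)" using hb by (simp only: of_rat_less_eq)
    thus "\<bar>?R b\<bar> \<le> (?R p)^3/125" by (simp add: of_rat_divide of_rat_power)
  qed
  have E: "?R (((t - s)/(q - p))^2 - p - q) = ((?R t - ?R s)/(?R q - ?R p))^2 - ?R p - ?R q"
    by (simp add: of_rat_diff of_rat_divide of_rat_power)
  have E1: "?R (19/100*p) = 19/100*?R p" by (simp add: of_rat_mult of_rat_divide)
  have E2: "?R (2*p) = 2*?R p" by (simp add: of_rat_mult)
  have "?R (19/100*p) \<le> ?R (((t - s)/(q - p))^2 - p - q)"
       "?R (((t - s)/(q - p))^2 - p - q) \<le> ?R (2*p)"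
    using H unfolding E E1 E2 by auto
  thus ?thesis by (simp only: of_rat_less_eq)
qed

theorem lemma3p6:
  fixes A B M D :: int and x1 y1 x2 y2 :: rat
  assumes disc: "4 * A^3 + 27 * B^2 \<noteq> 0"
    and Mpos: "M > 0"
    and Mbound: "max (10 * sqrt \<bar>real_of_int A\<bar>) (5 * root 3 \<bar>real_of_int B\<bar>) \<le> real_of_int M"
    and Dpos: "D > 0" and Dsqf: "squarefree D"
    and P_on: "on_curve (of_int (D^2 * A)) (of_int (D^3 * B)) (Pt x1 y1)"
    and Q_on: "on_curve (of_int (D^2 * A)) (of_int (D^3 * B)) (Pt x2 y2)"
    and xs: "of_int (M * D) \<le> x1" "x1 < x2"
    and ys: "y1 * y2 > 0"
  shows "case ec_add (of_int (D^2 * A)) (Pt x1 y1) (Pt x2 y2) of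
           Inf \<Rightarrow> False
         | Pt x3 y3 \<Rightarrow> 19/100 * x1 \<le> x3 \<and> x3 \<le> 2 * x1"
proof -
  define a :: rat where "a = of_int (D^2 * A)"
  define b :: rat where "b = of_int (D^3 * B)"
  have S: "y1^2 = x1^3 + a*x1 + b" using P_on unfolding on_curve_def a_def b_def by simp
  have T: "y2^2 = x2^3 + a*x2 + b" using Q_on unfolding on_curve_def a_def b_def by simp
  have red: "ec_add a (Pt x1 y1) (Pt x2 y2) = Pt (((y2 - y1)/(x2 - x1))^2 - x1 - x2)
      (((y2 - y1)/(x2 - x1)) * (x1 - (((y2 - y1)/(x2 - x1))^2 - x1 - x2)) - y1)"
    using xs(2) by (simp add: Let_def)
  have A1: "10 * sqrt \<bar>real_of_int A\<bar> \<le> real_of_int M" using Mbound by simp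
  have B1: "5 * root 3 \<bar>real_of_int B\<bar> \<le> real_of_int M" using Mbound by simp
  have "(10 * sqrt \<bar>real_of_int A\<bar>)^2 \<le> (real_of_int M)^2"
    using A1 by (intro power_mono) auto
  hence "100 * \<bar>real_of_int A\<bar> \<le> (real_of_int M)^2" by (simp add: power_mult_distrib)
  hence A2: "100 * \<bar>A\<bar> \<le> M^2" by (simp flip: of_int_abs) (metis of_int_le_iff of_int_mult of_int_numeral of_int_power)
  have "(5 * root 3 \<bar>real_of_int B\<bar>)^3 \<le> (real_of_int M)^3"
    using B1 by (intro power_mono) auto
  hence "125 * \<bar>real_of_int B\<bar> \<le> (real_of_int M)^3" by (simp add: power_mult_distrib)
  hence B2: "125 * \<bar>B\<bar> \<le> M^3" by (simp flip: of_int_abs) (metis of_int_le_iff of_int_mult of_int_numeral of_int_power)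
  have MD0: "0 < M * D" using Mpos Dpos by simp
  have MDq: "(0::rat) \<le> of_int (M*D)" using MD0 by (simp only: of_int_0_le_iff less_imp_le)
  have x1pos: "x1 > 0" using xs(1) MD0 by (meson of_int_0_less_iff less_le_trans)
  have ha: "\<bar>a\<bar> \<le> x1^2/100"
  proof -
    have "100 * \<bar>D^2 * A\<bar> \<le> (M*D)^2"
    proof -
      have "100 * \<bar>D^2 * A\<bar> = D^2 * (100 * \<bar>A\<bar>)" by (simp add: abs_mult)
      also have "\<dots> \<le> D^2 * M^2" using A2 by (intro mult_left_mono) auto
      finally show ?thesis by (simp add: power_mult_distrib mult_ac)
    qed
    hence "(of_int (100 * \<bar>D^2 * A\<bar>) :: rat) \<le> of_int ((M*D)^2)" by (simp only: of_int_le_iff)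
    hence "100 * \<bar>a\<bar> \<le> (of_int (M*D))^2" unfolding a_def by simp
    also have "\<dots> \<le> x1^2" using xs(1) MDq by (intro power_mono) auto
    finally show ?thesis by simp
  qed
  have hb: "\<bar>b\<bar> \<le> x1^3/125"
  proof -
    have "125 * \<bar>D^3 * B\<bar> \<le> (M*D)^3"
    proof -
      have "125 * \<bar>D^3 * B\<bar> = D^3 * (125 * \<bar>B\<bar>)" using Dpos by (simp add: abs_mult)
      also have "\<dots> \<le> D^3 * M^3" using B2 Dpos by (intro mult_left_mono) auto
      finally show ?thesis by (simp add: power_mult_distrib mult_ac)
    qed
    hence "(of_int (125 * \<bar>D^3 * B\<bar>) :: rat) \<le> of_int ((M*D)^3)" by (simp only: of_int_le_iff)
    hence "125 * \<bar>b\<bar> \<le> (of_int (M*D))^3" unfolding b_def by simp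
    also have "\<dots> \<le> x1^3" using xs(1) MDq by (intro power_mono) auto
    finally show ?thesis by simp
  qed
  have main: "19/100*x1 \<le> ((y2 - y1)/(x2 - x1))^2 - x1 - x2 \<and> ((y2 - y1)/(x2 - x1))^2 - x1 - x2 \<le> 2*x1"
  proof (cases "y1 > 0")
    case True
    hence "y2 > 0" using ys by (metis zero_less_mult_pos)
    thus ?thesis using homQ[OF x1pos xs(2) True _ S T ha hb] by simp
  next
    case False
    hence y1n: "y1 < 0" using ys by (cases "y1 = 0") auto
    hence y2n: "y2 < 0" using ys by (auto simp: zero_less_mult_iff)
    have "19/100*x1 \<le> ((-y2 - -y1)/(x2 - x1))^2 - x1 - x2 \<and> ((-y2 - -y1)/(x2 - x1))^2 - x1 - x2 \<le> 2*x1"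
      using homQ[OF x1pos xs(2), of "-y1" "-y2" a b] y1n y2n S T ha hb by simp
    moreover have "((-y2 - -y1)/(x2 - x1))^2 = ((y2 - y1)/(x2 - x1))^2"
      by (simp add: power2_eq_square field_simps)
    ultimately show ?thesis by simp
  qed
  show ?thesis unfolding a_def[symmetric] red using main by simp
qed

end
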